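(* Let $n\ge1$ and let $A=A[1]\cdots A[n]$ be a sequence of $n$ elements. Let $\#_1,\ldots,\#_n$ be pairwise distinct symbols, each different from every $A[j]$, and let $T=A\,\#_1\#_2\cdots\#_n$, a string of length $2n$. Then $S_T(k)/k\le n$ for all $k\ge2$, and $\delta(T)=S_T(1)=n+|\{A[1],\ldots,A[n]\}|$. In particular, the elements of $A$ are pairwise distinct if and only if $\delta(T)=2n$; equivalently, $A$ has a repeated element if and only if $\delta(T)<2n$.
   Context: For a string $T$, $S_T(k)$ is the number of distinct length-$k$ substrings of $T$, and $\delta(T)=\sup\{S_T(k)/k: k\ge1\}$. *)

theory Defs
  imports Complex_Main
begin

definition substrings_len :: "'a list \<Rightarrow> nat \<Rightarrow> 'a list set" where
  "substrings_len T k = {take k (drop i T) | i. i + k \<le> length T}"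

definition S :: "'a list \<Rightarrow> nat \<Rightarrow> nat" where
  "S T k = card (substrings_len T k)"

definition delta :: "'a list \<Rightarrow> real" where
  "delta T = (SUP k\<in>{1..}. real (S T k) / real k)"

end

theory Submission
  imports Defs
begin

lemma S_le: "S T k \<le> length T + 1 - k"
proof -
  have "substrings_len T k = (\<lambda>i. take k (drop i T)) ` {i. i + k \<le> length T}"
    unfolding substrings_len_def by auto
  hence "S T k \<le> card {i. i + k \<le> length T}"
    unfolding S_def
  proof -
    assume e: "substrings_len T k = (\<lambda>i. take k (drop i T)) ` {i. i + k \<le> length T}"
    have "finite {i. i + k \<le> length T}" by (rule finite_subset[of _ "{..length T}"]) auto
    thus "card (substrings_len T k) \<le> card {i. i + k \<le> length T}" unfolding e by (rule card_image_le)
  qed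
  also have "\<dots> \<le> card {..<length T + 1 - k}"
    by (rule card_mono) auto
  finally show ?thesis by simp
qed

lemma S_one: "S T 1 = card (set T)"
proof -
  have "substrings_len T 1 = (\<lambda>x. [x]) ` set T"
  proof
    show "substrings_len T 1 \<subseteq> (\<lambda>x. [x]) ` set T"
      unfolding substrings_len_def
      by (auto simp: take_Suc_conv_app_nth)
  next
    show "(\<lambda>x. [x]) ` set T \<subseteq> substrings_len T 1"
    proof
      fix y assume "y \<in> (\<lambda>x. [x]) ` set T"
      then obtain i where i: "i < length T" "y = [T!i]" by (auto simp: in_set_conv_nth)
      hence "y = take 1 (drop i T)" by (simp add: take_Suc_conv_app_nth)
      thus "y \<in> substrings_len T 1" unfolding substrings_len_def using i by auto
    qed
  qed
  moreover have "inj_on (\<lambda>x. [x]) (set T)" by (auto simp: inj_on_def)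
  ultimately show ?thesis unfolding S_def by (simp add: card_image)
qed

theorem mainTheorem4:
  fixes A hs :: "'a list" and n :: nat and T :: "'a list"
  assumes "n \<ge> 1"
    and "length A = n"
    and "length hs = n"
    and "distinct hs"
    and "set hs \<inter> set A = {}"
    and "T = A @ hs"
  shows "(\<forall>k\<ge>2. real (S T k) / real k \<le> real n)
    \<and> delta T = real (S T 1)
    \<and> S T 1 = n + card (set A)
    \<and> (distinct A \<longleftrightarrow> delta T = 2 * real n)
    \<and> (\<not> distinct A \<longleftrightarrow> delta T < 2 * real n)"
proof -
  have lenT: "length T = 2 * n" using assms by simp
  have S1: "S T 1 = n + card (set A)"
    using assms S_one[of T] distinct_card[OF assms(4)]
    by (simp add: card_Un_disjoint Int_commute)
  have bound: "real (S T k) / real k \<le> real n" if "k \<ge> 2" for k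
  proof -
    have "S T k \<le> 2 * n + 1 - k" using S_le[of T k] lenT by simp
    also have "\<dots> \<le> n * k"
    proof -
      have "2 * n \<le> n * k" using that by simp
      moreover have "2 * n + 1 - k \<le> 2 * n" using that by simp
      ultimately show ?thesis by linarith
    qed
    finally have "real (S T k) \<le> real n * real k" by (metis of_nat_le_iff of_nat_mult)
    thus ?thesis using that by (simp add: divide_le_eq)
  qed
  have cardA: "card (set A) \<le> n" using assms(2) card_length by metis
  have delta: "delta T = real (S T 1)"
    unfolding delta_def
  proof (rule cSup_eq_maximum)
    show "real (S T 1) \<in> (\<lambda>k. real (S T k) / real k) ` {1..}" by force
  next
    fix x assume "x \<in> (\<lambda>k. real (S T k) / real k) ` {1..}"
    then obtain k where k: "k \<ge> 1" "x = real (S T k) / real k" by auto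
    show "x \<le> real (S T 1)"
    proof (cases "k = 1")
      case False
      hence "x \<le> real n" using bound k by simp
      thus ?thesis using S1 by simp
    qed (use k in simp)
  qed
  have dA: "distinct A \<longleftrightarrow> card (set A) = n"
    using assms(2) card_distinct distinct_card by metis
  show ?thesis
    using bound delta S1 dA cardA by auto
qed

end
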